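(* Let $(Q,\cdot)$ be a groupoid of order $n$ with elements ordered as $q_1,\dots,q_n$. If $Q$ is $(n-1)$-translatable with respect to this ordering, then $Q$ is commutative.
   Context: A finite groupoid $(Q,\cdot)$ with ordering $q_1,\dots,q_n$ of its elements is $k$-translatable ($1\le k<n$) with respect to this ordering if for all $i\in\{2,\dots,n\}$ and $j\in\{1,\dots,n\}$, $q_i\cdot q_j=q_{i-1}\cdot q_{j-k}$, where the index $j-k$ is taken modulo $n$ in $\{1,\dots,n\}$; i.e. each row of the Cayley table is obtained from the previous one by moving its last $k$ entries to the front. *)

theory Defs
  imports Main
begin

text \<open>Index j - k taken modulo n, with representative in {1..n}
  (for 1 \<le> j \<le> n and k < n).\<close>
definition mod_index :: "nat \<Rightarrow> nat \<Rightarrow> nat \<Rightarrow> nat" where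
  "mod_index n j k = ((j + n - k - 1) mod n) + 1"

definition k_translatable ::
  "'a set \<Rightarrow> ('a \<Rightarrow> 'a \<Rightarrow> 'a) \<Rightarrow> (nat \<Rightarrow> 'a) \<Rightarrow> nat \<Rightarrow> bool" where
  "k_translatable Q mult q k \<longleftrightarrow>
     (let n = card Q in
       1 \<le> k \<and> k < n \<and>
       (\<forall>i\<in>{2..n}. \<forall>j\<in>{1..n}. mult (q i) (q j) = mult (q (i - 1)) (q (mod_index n j k))))"

definition groupoid :: "'a set \<Rightarrow> ('a \<Rightarrow> 'a \<Rightarrow> 'a) \<Rightarrow> bool" where
  "groupoid Q mult \<longleftrightarrow> (\<forall>x\<in>Q. \<forall>y\<in>Q. mult x y \<in> Q)"

end

theory Submission
  imports Defs
begin

theorem proposition8p4: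
  fixes Q :: "'a set" and mult :: "'a \<Rightarrow> 'a \<Rightarrow> 'a" and q :: "nat \<Rightarrow> 'a" and n :: nat
  assumes "finite Q"
    and "groupoid Q mult"
    and "card Q = n"
    and "bij_betw q {1..n} Q"
    and "k_translatable Q mult q (n - 1)"
  shows "\<forall>x\<in>Q. \<forall>y\<in>Q. mult x y = mult y x"
proof -
  have n2: "n \<ge> 2" and tr: "\<And>i j. i\<in>{2..n} \<Longrightarrow> j\<in>{1..n} \<Longrightarrow>
     mult (q i) (q j) = mult (q (i - 1)) (q (mod_index n j (n - 1)))"
    using assms(3,5) unfolding k_translatable_def Let_def by auto
  have mi: "mod_index n j (n - 1) = (j mod n) + 1" for j
    proof -
    have "j + n - (n - 1) - 1 = j" using n2 by simp
    then show ?thesis unfolding mod_index_def by simp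
  qed
  have key: "\<forall>j\<in>{1..n}. mult (q i) (q j) = mult (q 1) (q (((i + j - 2) mod n) + 1))"
    if "1 \<le> i" "i \<le> n" for i
    using that
  proof (induction i)
    case 0 then show ?case by simp
  next
    case (Suc i)
    show ?case
    proof (cases "i = 0")
      case True
      then show ?thesis by (auto simp: Suc_diff_le)
    next
      case False
      show ?thesis
      proof
        fix j assume j: "j \<in> {1..n}"
        have "mult (q (Suc i)) (q j) = mult (q i) (q ((j mod n) + 1))"
          using tr[of "Suc i" j] j Suc.prems False mi by auto
        also have "\<dots> = mult (q 1) (q (((i + ((j mod n) + 1) - 2) mod n) + 1))"
          using Suc.IH False Suc.prems n2 by (simp add: Suc_le_eq)
        also have "(i + ((j mod n) + 1) - 2) mod n = (Suc i + j - 2) mod n"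
        proof -
          have "i + ((j mod n) + 1) - 2 = (i - 1) + j mod n" using False by simp
          moreover have "Suc i + j - 2 = (i - 1) + j" using False j by simp
          ultimately show ?thesis by (metis mod_add_right_eq)
        qed
        finally show "mult (q (Suc i)) (q j) = mult (q 1) (q ((Suc i + j - 2) mod n + 1))" .
      qed
    qed
  qed
  show ?thesis
  proof (intro ballI)
    fix x y assume "x \<in> Q" "y \<in> Q"
    moreover have "Q = q ` {1..n}" using assms(4) by (simp add: bij_betw_def)
    ultimately obtain a b where a: "a \<in> {1..n}" "x = q a" and b: "b \<in> {1..n}" "y = q b"
      by blast
    have "mult x y = mult (q 1) (q (((a + b - 2) mod n) + 1))"
      using key[of a] a b by simp
    also have "\<dots> = mult y x" using key[of b] a b by (simp add: add.commute)
    finally show "mult x y = mult y x" .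
  qed
qed

end
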